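(* Let $G$ be a locally compact second countable principal groupoid which is proper, let $F$ be a Borel subset of $G^{(0)}$ containing exactly one element $e(u)$ of each orbit, and let $\sigma:G^{(0)}\to G^F$ be a regular cross section for $d_F$ with $\sigma(e(v))=e(v)$ for all $v$. Then the quotient topology on $G^F_F$ induced by $q:G\to G^F_F$, $q(x)=\sigma(r(x))x\sigma(d(x))^{-1}$, is locally compact Hausdorff. Consequently $\mathbf C_\sigma(G)$ is dense in $C_c(G)$ for the inductive limit topology.
   Context: $G$ second countable locally compact Hausdorff groupoid with $r$ open. Principal: $G^u_u=\{u\}$ for all units $u$ (i.e. $(r,d)$ injective). Proper: $(r,d):G\to G^{(0)}\times G^{(0)}$ is proper (preimages of compact sets are compact). $G^F=r^{-1}(F)$, $G^F_F=G^F\cap d^{-1}(F)$, $d_F=d|_{G^F}$; a regular cross section is a Borel $\sigma$ with $d(\sigma(u))=u$ and $\sigma(K)$ relatively compact for compact $K$. $\mathbf C_\sigma(G)$ is the linear span of functions $x\mapsto g_1(r(x))g(q(x))g_2(d(x))$ with $g_1,g_2\in C_c(G^{(0)})$, $g\in C_c(G^F_F)$. *)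

theory Defs
  imports "HOL-Analysis.Analysis"
begin

definition groupoid_axioms ::
  "'g set \<Rightarrow> ('g \<Rightarrow> 'g) \<Rightarrow> ('g \<Rightarrow> 'g) \<Rightarrow> ('g \<Rightarrow> 'g \<Rightarrow> 'g) \<Rightarrow> ('g \<Rightarrow> 'g) \<Rightarrow> bool" where
  "groupoid_axioms G r d m i \<longleftrightarrow>
     (\<forall>x\<in>G. r x \<in> G \<and> d x \<in> G \<and> i x \<in> G) \<and>
     (\<forall>x\<in>G. r (r x) = r x \<and> d (r x) = r x \<and> r (d x) = d x \<and> d (d x) = d x) \<and>
     (\<forall>x\<in>G. \<forall>y\<in>G. d x = r y \<longrightarrow> m x y \<in> G \<and> r (m x y) = r x \<and> d (m x y) = d y) \<and>
     (\<forall>x\<in>G. \<forall>y\<in>G. \<forall>z\<in>G. d x = r y \<and> d y = r z \<longrightarrow> m (m x y) z = m x (m y z)) \<and>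
     (\<forall>x\<in>G. m (r x) x = x \<and> m x (d x) = x) \<and>
     (\<forall>x\<in>G. d (i x) = r x \<and> r (i x) = d x \<and> m x (i x) = r x \<and> m (i x) x = d x)"

definition units :: "'g topology \<Rightarrow> ('g \<Rightarrow> 'g) \<Rightarrow> 'g set" where
  "units T r = r ` topspace T"

definition composable :: "'g topology \<Rightarrow> ('g \<Rightarrow> 'g) \<Rightarrow> ('g \<Rightarrow> 'g) \<Rightarrow> ('g \<times> 'g) set" where
  "composable T r d = {(x, y). x \<in> topspace T \<and> y \<in> topspace T \<and> d x = r y}"

definition lcsc_groupoid ::
  "'g topology \<Rightarrow> ('g \<Rightarrow> 'g) \<Rightarrow> ('g \<Rightarrow> 'g) \<Rightarrow> ('g \<Rightarrow> 'g \<Rightarrow> 'g) \<Rightarrow> ('g \<Rightarrow> 'g) \<Rightarrow> bool" where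
  "lcsc_groupoid T r d m i \<longleftrightarrow>
     groupoid_axioms (topspace T) r d m i \<and>
     continuous_map (subtopology (prod_topology T T) (composable T r d)) T (\<lambda>(x, y). m x y) \<and>
     continuous_map T T i \<and>
     continuous_map T T r \<and> continuous_map T T d \<and>
     Hausdorff_space T \<and> locally_compact_space T \<and> second_countable T \<and>
     open_map T (subtopology T (units T r)) r"

definition principal_groupoid :: "'g topology \<Rightarrow> ('g \<Rightarrow> 'g) \<Rightarrow> ('g \<Rightarrow> 'g) \<Rightarrow> bool" where
  "principal_groupoid T r d \<longleftrightarrow> (\<forall>x\<in>topspace T. r x = d x \<longrightarrow> x = d x)"

definition proper_groupoid :: "'g topology \<Rightarrow> ('g \<Rightarrow> 'g) \<Rightarrow> ('g \<Rightarrow> 'g) \<Rightarrow> bool" where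
  "proper_groupoid T r d \<longleftrightarrow>
     (\<forall>K. compactin (prod_topology (subtopology T (units T r)) (subtopology T (units T r))) K
          \<longrightarrow> compactin T {x \<in> topspace T. (r x, d x) \<in> K})"

definition borel_in :: "'a topology \<Rightarrow> 'a set \<Rightarrow> bool" where
  "borel_in X A \<longleftrightarrow> A \<in> sigma_sets (topspace X) {U. openin X U}"

definition rangeF :: "'g topology \<Rightarrow> ('g \<Rightarrow> 'g) \<Rightarrow> 'g set \<Rightarrow> 'g set" where
  "rangeF T r F = {x \<in> topspace T. r x \<in> F}"

definition reductionF :: "'g topology \<Rightarrow> ('g \<Rightarrow> 'g) \<Rightarrow> ('g \<Rightarrow> 'g) \<Rightarrow> 'g set \<Rightarrow> 'g set" where
  "reductionF T r d F = {x \<in> topspace T. r x \<in> F \<and> d x \<in> F}"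

definition regular_cross_section ::
  "'g topology \<Rightarrow> ('g \<Rightarrow> 'g) \<Rightarrow> ('g \<Rightarrow> 'g) \<Rightarrow> 'g set \<Rightarrow> ('g \<Rightarrow> 'g) \<Rightarrow> bool" where
  "regular_cross_section T r d F \<sigma> \<longleftrightarrow>
     (\<forall>u\<in>units T r. \<sigma> u \<in> rangeF T r F \<and> d (\<sigma> u) = u) \<and>
     (\<forall>U. openin T U \<longrightarrow> borel_in (subtopology T (units T r)) {u \<in> units T r. \<sigma> u \<in> U}) \<and>
     (\<forall>K. compactin (subtopology T (units T r)) K \<longrightarrow> compactin T (T closure_of (\<sigma> ` K)))"

definition qmap ::
  "('g \<Rightarrow> 'g) \<Rightarrow> ('g \<Rightarrow> 'g) \<Rightarrow> ('g \<Rightarrow> 'g \<Rightarrow> 'g) \<Rightarrow> ('g \<Rightarrow> 'g) \<Rightarrow> ('g \<Rightarrow> 'g) \<Rightarrow> 'g \<Rightarrow> 'g" where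
  "qmap r d m i \<sigma> x = m (m (\<sigma> (r x)) x) (i (\<sigma> (d x)))"

definition quotient_topology :: "'a topology \<Rightarrow> ('a \<Rightarrow> 'b) \<Rightarrow> 'b set \<Rightarrow> 'b topology" where
  "quotient_topology X q S = topology (\<lambda>U. U \<subseteq> S \<and> openin X {x \<in> topspace X. q x \<in> U})"

definition Cc :: "'a topology \<Rightarrow> ('a \<Rightarrow> complex) set" where
  "Cc X = {f. continuous_map X euclidean f \<and>
              compactin X (X closure_of {x \<in> topspace X. f x \<noteq> 0}) \<and>
              (\<forall>x. x \<notin> topspace X \<longrightarrow> f x = 0)}"

definition Csigma ::
  "'g topology \<Rightarrow> ('g \<Rightarrow> 'g) \<Rightarrow> ('g \<Rightarrow> 'g) \<Rightarrow> ('g \<Rightarrow> 'g \<Rightarrow> 'g) \<Rightarrow> ('g \<Rightarrow> 'g) \<Rightarrow> 'g set \<Rightarrow> ('g \<Rightarrow> 'g)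
   \<Rightarrow> ('g \<Rightarrow> complex) set" where
  "Csigma T r d m i F \<sigma> =
     {f. \<exists>(n::nat) c g1 g g2.
          (\<forall>k<n. g1 k \<in> Cc (subtopology T (units T r)) \<and> g2 k \<in> Cc (subtopology T (units T r)) \<and>
                 g k \<in> Cc (quotient_topology T (qmap r d m i \<sigma>) (reductionF T r d F))) \<and>
          f = (\<lambda>x. if x \<in> topspace T
                   then (\<Sum>k<n. c k * g1 k (r x) * g k (qmap r d m i \<sigma> x) * g2 k (d x)) else 0)}"

text \<open>Density in C_c(X) for the (locally convex) inductive limit topology: a base of
  0-neighbourhoods consists of the absolutely convex subsets U of C_c(X) such that
  U contains a uniform ball of C_K(X) for every compact K.\<close>
definition ind_lim_zero_nbhd :: "'a topology \<Rightarrow> ('a \<Rightarrow> complex) set \<Rightarrow> bool" where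
  "ind_lim_zero_nbhd X U \<longleftrightarrow>
     U \<subseteq> Cc X \<and>
     (\<forall>f\<in>U. \<forall>g\<in>U. \<forall>t::real. 0 \<le> t \<and> t \<le> 1 \<longrightarrow> (\<lambda>x. of_real t * f x + of_real (1 - t) * g x) \<in> U) \<and>
     (\<forall>f\<in>U. \<forall>c::complex. cmod c \<le> 1 \<longrightarrow> (\<lambda>x. c * f x) \<in> U) \<and>
     (\<forall>K. compactin X K \<longrightarrow> (\<exists>\<epsilon>>0. \<forall>g\<in>Cc X.
          {x \<in> topspace X. g x \<noteq> 0} \<subseteq> K \<and> (\<forall>x. cmod (g x) < \<epsilon>) \<longrightarrow> g \<in> U))"

definition dense_ind_lim :: "'a topology \<Rightarrow> ('a \<Rightarrow> complex) set \<Rightarrow> bool" where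
  "dense_ind_lim X A \<longleftrightarrow> A \<subseteq> Cc X \<and>
     (\<forall>f\<in>Cc X. \<forall>U. ind_lim_zero_nbhd X U \<longrightarrow> (\<exists>a\<in>A. (\<lambda>x. f x - a x) \<in> U))"

end

theory Submission
  imports Defs
begin

lemma cm_mult:
  fixes f g :: "'a \<Rightarrow> 'b::real_normed_algebra"
  shows "continuous_map X euclidean f \<Longrightarrow> continuous_map X euclidean g \<Longrightarrow> continuous_map X euclidean (\<lambda>x. f x * g x)"
  by (simp add: continuous_map_atin tendsto_mult)

lemma cm_of_real:
  "continuous_map X euclideanreal f \<Longrightarrow> continuous_map X euclidean (\<lambda>x. complex_of_real (f x))"
  by (simp add: continuous_map_atin tendsto_of_real)

lemma bump:
  assumes lc: "locally_compact_space X" and H: "Hausdorff_space X" and K: "compactin X K"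
    and N: "openin X N" and KN: "K \<subseteq> N"
  obtains \<phi> where "continuous_map X euclideanreal \<phi>" "\<forall>x. 0 \<le> \<phi> x \<and> \<phi> x \<le> 1" "\<forall>x\<in>K. \<phi> x = 1"
    "compactin X (X closure_of {x\<in>topspace X. \<phi> x \<noteq> 0})" "\<forall>x\<in>topspace X. \<phi> x \<noteq> 0 \<longrightarrow> x \<in> N"
proof -
  have LN: "locally_compact_space (subtopology X N)"
    using locally_compact_space_open_subset[OF disjI1[OF H] lc N] .
  have HN: "Hausdorff_space (subtopology X N)"
    using H Hausdorff_space_subtopology by blast
  have KN': "compactin (subtopology X N) K"
    using K KN compactin_subtopology by blast
  obtain U L where U: "openin (subtopology X N) U" and L: "compactin (subtopology X N) L"
    and KU: "K \<subseteq> U" and UL: "U \<subseteq> L"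
    using LN KN' unfolding locally_compact_space_compact_closed_compact[OF disjI1[OF HN]] by meson
  have UX: "openin X U" using U unfolding openin_open_subtopology[OF N] by simp
  have LX: "compactin X L" "L \<subseteq> N" using L by (simp_all add: compactin_subtopology)
  have LC: "closedin X L" using compactin_imp_closedin[OF H LX(1)] .
  have cr: "completely_regular_space X"
    using locally_compact_regular_imp_completely_regular_space[OF lc disjI1[OF H]] .
  have cl: "closedin X (topspace X - U)" by (rule closedin_diff) (simp_all add: UX)
  have dj: "disjnt K (topspace X - U)" using KU unfolding disjnt_def by blast
  obtain f where f: "continuous_map X (top_of_set {0..1::real}) f" "f ` (topspace X - U) \<subseteq> {0}" "f ` K \<subseteq> {1}"
    by (rule Urysohn_completely_regular_compact_closed[of 0 1 X K "topspace X - U", OF _ cr K cl dj]) auto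
  have fc: "continuous_map X euclideanreal f"
    using f(1) continuous_map_into_fulltopology by blast
  define \<phi> where "\<phi> x = max 0 (min 1 (f x))" for x
  have sup: "\<forall>x\<in>topspace X. \<phi> x \<noteq> 0 \<longrightarrow> x \<in> U"
    using f(2) by (auto simp: \<phi>_def)
  have cs: "X closure_of {x\<in>topspace X. \<phi> x \<noteq> 0} \<subseteq> L"
    by (rule closure_of_minimal) (use LC sup UL in auto)
  show thesis
  proof
    show "continuous_map X euclideanreal \<phi>"
      unfolding \<phi>_def using fc by (intro continuous_intros) auto
    show "\<forall>x. 0 \<le> \<phi> x \<and> \<phi> x \<le> 1" by (auto simp: \<phi>_def)
    show "\<forall>x\<in>K. \<phi> x = 1" using f(3) by (auto simp: \<phi>_def)
    show "compactin X (X closure_of {x\<in>topspace X. \<phi> x \<noteq> 0})"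
      using closed_compactin[OF LX(1) cs] by simp
    show "\<forall>x\<in>topspace X. \<phi> x \<noteq> 0 \<longrightarrow> x \<in> N" using sup UL LX(2) by blast
  qed
qed

lemma bump_ex:
  assumes "locally_compact_space X" "Hausdorff_space X" "compactin X K" "openin X N" "K \<subseteq> N"
  shows "\<exists>\<phi>. continuous_map X euclideanreal \<phi> \<and> (\<forall>x. 0 \<le> \<phi> x \<and> \<phi> x \<le> 1) \<and> (\<forall>x\<in>K. \<phi> x = 1) \<and>
    compactin X (X closure_of {x\<in>topspace X. \<phi> x \<noteq> 0}) \<and> (\<forall>x\<in>topspace X. \<phi> x \<noteq> 0 \<longrightarrow> x \<in> N)"
proof -
  obtain \<phi> where "continuous_map X euclideanreal \<phi>" "\<forall>x. 0 \<le> \<phi> x \<and> \<phi> x \<le> 1" "\<forall>x\<in>K. \<phi> x = 1"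
    "compactin X (X closure_of {x\<in>topspace X. \<phi> x \<noteq> 0})" "\<forall>x\<in>topspace X. \<phi> x \<noteq> 0 \<longrightarrow> x \<in> N"
    by (rule bump[OF assms])
  then show ?thesis by (intro exI[of _ \<phi>]) simp
qed

lemma partition_unity:
  assumes lc: "locally_compact_space X" and H: "Hausdorff_space X" and P: "compactin X P"
    and I: "finite I" and N: "\<forall>i\<in>I. openin X (N i)" and PN: "P \<subseteq> (\<Union>i\<in>I. N i)"
  shows "\<exists>\<phi>. (\<forall>i\<in>I. continuous_map X euclideanreal (\<phi> i)) \<and> (\<forall>i\<in>I. \<forall>x. 0 \<le> \<phi> i x) \<and>
     (\<forall>i\<in>I. compactin X (X closure_of {x\<in>topspace X. \<phi> i x \<noteq> 0})) \<and>
     (\<forall>i\<in>I. \<forall>x\<in>topspace X. \<phi> i x \<noteq> 0 \<longrightarrow> x \<in> N i) \<and>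
     (\<forall>x. (\<Sum>i\<in>I. \<phi> i x) \<le> 1) \<and> (\<forall>x\<in>P. (\<Sum>i\<in>I. \<phi> i x) = 1)"
proof -
  have reg: "regular_space X" using locally_compact_Hausdorff_imp_regular_space[OF lc H] .
  have nb: "neighbourhood_base_of (compactin X) X" using locally_compact_imp_neighbourhood_base[OF lc reg] .
  have "\<forall>p\<in>P. \<exists>i W C. i \<in> I \<and> openin X W \<and> compactin X C \<and> p \<in> W \<and> W \<subseteq> C \<and> C \<subseteq> N i"
  proof
    fix p assume "p \<in> P"
    then obtain i where i: "i \<in> I" "p \<in> N i" using PN by blast
    then have "openin X (N i)" using N by blast
    then obtain W C where "openin X W" "compactin X C" "p \<in> W" "W \<subseteq> C" "C \<subseteq> N i"
      using nb i(2) unfolding neighbourhood_base_of by meson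
    then show "\<exists>i W C. i \<in> I \<and> openin X W \<and> compactin X C \<and> p \<in> W \<and> W \<subseteq> C \<and> C \<subseteq> N i"
      using i by blast
  qed
  then obtain ii WW CC where WC: "\<forall>p\<in>P. ii p \<in> I \<and> openin X (WW p) \<and> compactin X (CC p) \<and> p \<in> WW p \<and> WW p \<subseteq> CC p \<and> CC p \<subseteq> N (ii p)"
    by metis
  have "\<exists>\<F>. finite \<F> \<and> \<F> \<subseteq> WW ` P \<and> P \<subseteq> \<Union>\<F>"
    by (rule compactinD[OF P]) (use WC in auto)
  then obtain \<F> where F: "finite \<F>" "\<F> \<subseteq> WW ` P" "P \<subseteq> \<Union>\<F>" by blast
  obtain D where D: "D \<subseteq> P" "finite D" "\<F> = WW ` D"
    using finite_subset_image[OF F(1) F(2)] by blast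
  define K where "K i = \<Union> (CC ` {p\<in>D. ii p = i})" for i
  have Kc: "compactin X (K i)" if "i \<in> I" for i
    unfolding K_def by (rule compactin_Union) (use D WC in auto)
  have KN: "K i \<subseteq> N i" for i
    unfolding K_def using D WC by auto
  have "\<forall>i\<in>I. \<exists>\<psi>. continuous_map X euclideanreal \<psi> \<and> (\<forall>x. 0 \<le> \<psi> x \<and> \<psi> x \<le> 1) \<and> (\<forall>x\<in>K i. \<psi> x = 1) \<and>
    compactin X (X closure_of {x\<in>topspace X. \<psi> x \<noteq> 0}) \<and> (\<forall>x\<in>topspace X. \<psi> x \<noteq> 0 \<longrightarrow> x \<in> N i)"
    using bump_ex[OF lc H Kc _ KN] N by blast
  then obtain \<psi> where psi: "\<forall>i\<in>I. continuous_map X euclideanreal (\<psi> i) \<and> (\<forall>x. 0 \<le> \<psi> i x \<and> \<psi> i x \<le> 1) \<and> (\<forall>x\<in>K i. \<psi> i x = 1) \<and>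
    compactin X (X closure_of {x\<in>topspace X. \<psi> i x \<noteq> 0}) \<and> (\<forall>x\<in>topspace X. \<psi> i x \<noteq> 0 \<longrightarrow> x \<in> N i)"
    by (rule bchoice[elim_format]) blast
  define S where "S x = (\<Sum>i\<in>I. \<psi> i x)" for x
  have S0: "0 \<le> S x" for x unfolding S_def using psi by (simp add: sum_nonneg)
  have M: "max 1 (S x) > 0" for x by simp
  define \<phi> where "\<phi> i x = \<psi> i x / max 1 (S x)" for i x
  have nz: "\<phi> i x \<noteq> 0 \<longleftrightarrow> \<psi> i x \<noteq> 0" for i x
    unfolding \<phi>_def using M[of x] by simp
  have Scont: "continuous_map X euclideanreal S"
    unfolding S_def by (rule continuous_map_sum) (use psi I in auto)
  have sumphi: "(\<Sum>i\<in>I. \<phi> i x) = S x / max 1 (S x)" for x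
    unfolding \<phi>_def S_def by (simp add: sum_divide_distrib)
  show ?thesis
  proof (intro exI[of _ \<phi>] conjI ballI allI impI)
    fix i assume i: "i \<in> I"
    show "continuous_map X euclideanreal (\<phi> i)"
      unfolding \<phi>_def using psi i Scont by (intro continuous_intros) auto
    show "0 \<le> \<phi> i x" for x unfolding \<phi>_def using psi i M[of x] by simp
    show "compactin X (X closure_of {x\<in>topspace X. \<phi> i x \<noteq> 0})"
      unfolding nz using psi i by blast
    show "x \<in> N i" if "x \<in> topspace X" "\<phi> i x \<noteq> 0" for x
      using psi i that unfolding nz by blast
  next
    fix x
    show "(\<Sum>i\<in>I. \<phi> i x) \<le> 1" unfolding sumphi using S0[of x] by (simp add: divide_le_eq)
  next
    fix x assume "x \<in> P"
    then obtain p where p: "p \<in> D" "x \<in> WW p" using F D by blast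
    then have pP: "p \<in> P" using D by blast
    have "x \<in> K (ii p)" unfolding K_def using p pP WC by blast
    then have "\<psi> (ii p) x = 1" using psi WC pP by blast
    moreover have "\<psi> (ii p) x \<le> S x" unfolding S_def
      by (rule member_le_sum) (use psi WC pP I in auto)
    ultimately have "S x \<ge> 1" by simp
    then show "(\<Sum>i\<in>I. \<phi> i x) = 1" unfolding sumphi by simp
  qed
qed

lemma istop_quot: "istopology (\<lambda>U. U \<subseteq> S \<and> openin X {x \<in> topspace X. q x \<in> U})"
proof -
  have a: "{x \<in> topspace X. q x \<in> A \<inter> B} = {x \<in> topspace X. q x \<in> A} \<inter> {x \<in> topspace X. q x \<in> B}" for A B
    by blast
  have b: "{x \<in> topspace X. q x \<in> \<Union>\<K>} = \<Union>((\<lambda>K. {x \<in> topspace X. q x \<in> K}) ` \<K>)" for \<K>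
    by blast
  have 1: "A \<inter> B \<subseteq> S \<and> openin X {x \<in> topspace X. q x \<in> A \<inter> B}"
    if "A \<subseteq> S \<and> openin X {x \<in> topspace X. q x \<in> A}" "B \<subseteq> S \<and> openin X {x \<in> topspace X. q x \<in> B}" for A B
  proof
    show "A \<inter> B \<subseteq> S" using that by blast
    show "openin X {x \<in> topspace X. q x \<in> A \<inter> B}" unfolding a
      by (rule openin_Int) (use that in simp_all)
  qed
  have 2: "\<Union>\<K> \<subseteq> S \<and> openin X {x \<in> topspace X. q x \<in> \<Union>\<K>}"
    if H: "\<forall>K\<in>\<K>. K \<subseteq> S \<and> openin X {x \<in> topspace X. q x \<in> K}" for \<K>
    using H unfolding b by (intro conjI openin_Union) auto
  show ?thesis unfolding istopology_def using 1 2 by blast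
qed

lemma openin_quot: "openin (quotient_topology X q S) U \<longleftrightarrow> U \<subseteq> S \<and> openin X {x \<in> topspace X. q x \<in> U}"
  unfolding quotient_topology_def topology_inverse'[OF istop_quot] by simp

lemma topspace_quot:
  assumes "q ` topspace X \<subseteq> S"
  shows "topspace (quotient_topology X q S) = S"
proof -
  have "{x \<in> topspace X. q x \<in> S} = topspace X" using assms by blast
  then have "openin (quotient_topology X q S) S" unfolding openin_quot by simp
  then have "S \<subseteq> topspace (quotient_topology X q S)" by (rule openin_subset)
  moreover have "topspace (quotient_topology X q S) \<subseteq> S"
    unfolding topspace_def openin_quot by blast
  ultimately show ?thesis by blast
qed

lemma cont_quot:
  assumes "q ` topspace X \<subseteq> S"
  shows "continuous_map X (quotient_topology X q S) q"
  unfolding continuous_map_def topspace_quot[OF assms] openin_quot using assms by blast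

locale gsetup =
  fixes T :: "'g topology" and r d :: "'g \<Rightarrow> 'g" and m :: "'g \<Rightarrow> 'g \<Rightarrow> 'g"
    and i :: "'g \<Rightarrow> 'g" and F :: "'g set" and \<sigma> :: "'g \<Rightarrow> 'g"
  assumes lcsc: "lcsc_groupoid T r d m i"
    and princ: "principal_groupoid T r d"
    and propr: "proper_groupoid T r d"
    and FU: "F \<subseteq> units T r"
    and uniq: "\<forall>u\<in>units T r. \<exists>!v. v \<in> F \<and> (\<exists>x\<in>topspace T. d x = u \<and> r x = v)"
    and rcs: "regular_cross_section T r d F \<sigma>"
    and sfix: "\<forall>v\<in>F. \<sigma> v = v"
begin

abbreviation "G \<equiv> topspace T"
abbreviation "G0 \<equiv> units T r"
abbreviation "q \<equiv> qmap r d m i \<sigma>"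
abbreviation "T0 \<equiv> subtopology T G0"

lemma ax: "groupoid_axioms G r d m i" using lcsc unfolding lcsc_groupoid_def by blast

lemma rG: "x \<in> G \<Longrightarrow> r x \<in> G" and dG: "x \<in> G \<Longrightarrow> d x \<in> G" and iG: "x \<in> G \<Longrightarrow> i x \<in> G"
  using ax unfolding groupoid_axioms_def by blast+

lemma rr: "x \<in> G \<Longrightarrow> r (r x) = r x" and dr: "x \<in> G \<Longrightarrow> d (r x) = r x"
  and rd: "x \<in> G \<Longrightarrow> r (d x) = d x" and dd: "x \<in> G \<Longrightarrow> d (d x) = d x"
  using ax unfolding groupoid_axioms_def by blast+

lemma mG: "x \<in> G \<Longrightarrow> y \<in> G \<Longrightarrow> d x = r y \<Longrightarrow> m x y \<in> G"
  and rm: "x \<in> G \<Longrightarrow> y \<in> G \<Longrightarrow> d x = r y \<Longrightarrow> r (m x y) = r x"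
  and dm: "x \<in> G \<Longrightarrow> y \<in> G \<Longrightarrow> d x = r y \<Longrightarrow> d (m x y) = d y"
  using ax unfolding groupoid_axioms_def by blast+

lemma assoc: "x \<in> G \<Longrightarrow> y \<in> G \<Longrightarrow> z \<in> G \<Longrightarrow> d x = r y \<Longrightarrow> d y = r z \<Longrightarrow> m (m x y) z = m x (m y z)"
  using ax unfolding groupoid_axioms_def by blast

lemma lu: "x \<in> G \<Longrightarrow> m (r x) x = x" and ru: "x \<in> G \<Longrightarrow> m x (d x) = x"
  using ax unfolding groupoid_axioms_def by blast+

lemma di: "x \<in> G \<Longrightarrow> d (i x) = r x" and ri: "x \<in> G \<Longrightarrow> r (i x) = d x"
  and mi: "x \<in> G \<Longrightarrow> m x (i x) = r x" and im: "x \<in> G \<Longrightarrow> m (i x) x = d x"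
  using ax unfolding groupoid_axioms_def by blast+

lemma contr: "continuous_map T T r" and contd: "continuous_map T T d"
  and HT: "Hausdorff_space T" and LT: "locally_compact_space T"
  and openr: "open_map T T0 r"
  using lcsc unfolding lcsc_groupoid_def by blast+

lemma G0_iff: "u \<in> G0 \<longleftrightarrow> u \<in> G \<and> r u = u"
proof
  assume "u \<in> G0"
  then obtain x where "x \<in> G" "u = r x" unfolding units_def by blast
  then show "u \<in> G \<and> r u = u" using rG rr by simp
next
  assume H: "u \<in> G \<and> r u = u"
  then have "r u \<in> r ` G" by (intro imageI) simp
  then show "u \<in> G0" using H unfolding units_def by simp
qed

lemma G0_G: "u \<in> G0 \<Longrightarrow> u \<in> G" using G0_iff by blast
lemma G0_r: "u \<in> G0 \<Longrightarrow> r u = u" using G0_iff by blast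
lemma G0_d: "u \<in> G0 \<Longrightarrow> d u = u"
proof -
  assume "u \<in> G0"
  then have "u \<in> G" "r u = u" using G0_iff by blast+
  then show "d u = u" using dr[of u] by simp
qed

lemma rG0: "x \<in> G \<Longrightarrow> r x \<in> G0" and dG0: "x \<in> G \<Longrightarrow> d x \<in> G0"
  unfolding G0_iff using rG dG rr rd by auto

lemma G0_closed: "closedin T G0"
proof -
  have "G0 = {x \<in> G. r x = id x}" using G0_iff by auto
  then show ?thesis using closedin_continuous_maps_eq[OF HT contr continuous_map_id] by simp
qed

lemma HT0: "Hausdorff_space T0" using Hausdorff_space_subtopology[OF HT] .
lemma LT0: "locally_compact_space T0" using locally_compact_space_closed_subset[OF LT G0_closed] .

lemma contr0: "continuous_map T T0 r"
  using continuous_map_into_subtopology[OF contr] rG0 by blast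
lemma contd0: "continuous_map T T0 d"
  using continuous_map_into_subtopology[OF contd] dG0 by blast

lemma inj_rd: "x \<in> G \<Longrightarrow> y \<in> G \<Longrightarrow> r x = r y \<Longrightarrow> d x = d y \<Longrightarrow> x = y"
proof -
  assume x: "x \<in> G" and y: "y \<in> G" and r: "r x = r y" and d: "d x = d y"
  define z where "z = m x (i y)"
  have c1: "d x = r (i y)" using ri[OF y] d by simp
  have zG: "z \<in> G" unfolding z_def using mG[OF x iG[OF y] c1] .
  have rz: "r z = r x" unfolding z_def using rm[OF x iG[OF y] c1] .
  have dz: "d z = r x" unfolding z_def using dm[OF x iG[OF y] c1] di[OF y] r by simp
  have "z = d z" using princ zG rz dz unfolding principal_groupoid_def by metis
  then have z1: "z = r y" using dz r by simp
  have "m z y = m x (m (i y) y)" unfolding z_def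
    by (rule assoc[OF x iG[OF y] y c1]) (simp add: di[OF y])
  also have "\<dots> = m x (d x)" using im[OF y] d by simp
  also have "\<dots> = x" using ru[OF x] .
  finally have "m z y = x" .
  moreover have "m z y = y" using z1 lu[OF y] by simp
  ultimately show "x = y" by simp
qed

lemma sig: "u \<in> G0 \<Longrightarrow> \<sigma> u \<in> G \<and> r (\<sigma> u) \<in> F \<and> d (\<sigma> u) = u"
  using rcs unfolding regular_cross_section_def rangeF_def by blast

definition e where "e u = r (\<sigma> u)"

lemma eF: "u \<in> G0 \<Longrightarrow> e u \<in> F" unfolding e_def using sig by blast

lemma FG0: "v \<in> F \<Longrightarrow> v \<in> G0" using FU by blast

lemma e_F: "v \<in> F \<Longrightarrow> e v = v" unfolding e_def using sfix FG0 G0_r by metis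

lemma orb1: "u \<in> G0 \<Longrightarrow> x \<in> G \<Longrightarrow> d x = u \<Longrightarrow> r x \<in> F \<Longrightarrow> r x = e u"
proof -
  assume u: "u \<in> G0" and x: "x \<in> G" "d x = u" "r x \<in> F"
  have "\<exists>!v. v \<in> F \<and> (\<exists>x\<in>G. d x = u \<and> r x = v)" using uniq u by blast
  moreover have "e u \<in> F \<and> (\<exists>x\<in>G. d x = u \<and> r x = e u)" using sig[OF u] unfolding e_def by blast
  moreover have "r x \<in> F \<and> (\<exists>y\<in>G. d y = u \<and> r y = r x)" using x by blast
  ultimately show ?thesis by metis
qed

lemma q_props:
  assumes x: "x \<in> G"
  shows "q x = e (r x) \<and> q x = e (d x) \<and> q x \<in> F"
proof -
  define s1 where "s1 = \<sigma> (r x)"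
  define s2 where "s2 = \<sigma> (d x)"
  have s1: "s1 \<in> G" "r s1 \<in> F" "d s1 = r x" using sig[OF rG0[OF x]] unfolding s1_def by auto
  have s2: "s2 \<in> G" "r s2 \<in> F" "d s2 = d x" using sig[OF dG0[OF x]] unfolding s2_def by auto
  define y where "y = m s1 x"
  have y: "y \<in> G" "r y = r s1" "d y = d x" unfolding y_def using mG[OF s1(1) x s1(3)] rm[OF s1(1) x s1(3)] dm[OF s1(1) x s1(3)] by auto
  define z where "z = i s2"
  have z: "z \<in> G" "d z = r s2" "r z = d x" unfolding z_def using iG[OF s2(1)] di[OF s2(1)] ri[OF s2(1)] s2(3) by auto
  have qe: "q x = m y z" unfolding qmap_def y_def z_def s1_def s2_def by simp
  have c: "d y = r z" using y z by simp
  have w: "q x \<in> G" "r (q x) = r s1" "d (q x) = r s2"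
    unfolding qe using mG[OF y(1) z(1) c] rm[OF y(1) z(1) c] dm[OF y(1) z(1) c] y z by auto
  have u: "d (q x) \<in> G0" using dG0[OF w(1)] .
  have a1: "r (q x) = e (d (q x))" using orb1[OF u w(1) refl] w s1 by simp
  have a2: "r (d (q x)) = e (d (q x))" using orb1[OF u dG[OF w(1)]] dd[OF w(1)] rd[OF w(1)] w s2 by simp
  have rd_eq: "r (q x) = d (q x)" using a1 a2 rd[OF w(1)] by simp
  have qd: "q x = d (q x)" using princ w(1) rd_eq unfolding principal_groupoid_def by blast
  show ?thesis
  proof (intro conjI)
    show "q x = e (r x)" using qd rd_eq w(2) unfolding e_def s1_def by simp
    show "q x = e (d x)" using qd w(3) unfolding e_def s2_def by simp
    show "q x \<in> F" using qd w(3) s2 by simp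
  qed
qed

lemma q_e_r: "x \<in> G \<Longrightarrow> q x = e (r x)" using q_props by blast
lemma q_e_d: "x \<in> G \<Longrightarrow> q x = e (d x)" using q_props by blast
lemma qF: "x \<in> G \<Longrightarrow> q x \<in> F" using q_props by blast

lemma redF: "reductionF T r d F = F"
proof
  show "reductionF T r d F \<subseteq> F"
  proof
    fix x assume "x \<in> reductionF T r d F"
    then have x: "x \<in> G" "r x \<in> F" "d x \<in> F" unfolding reductionF_def by auto
    have u: "d x \<in> G0" using dG0[OF x(1)] .
    have "r x = e (d x)" using orb1[OF u x(1) refl x(2)] .
    moreover have "r (d x) = e (d x)" using orb1[OF u dG[OF x(1)] dd[OF x(1)]] rd[OF x(1)] x(3) by simp
    ultimately have "r x = d x" using rd[OF x(1)] by simp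
    then have "x = d x" using princ x(1) unfolding principal_groupoid_def by blast
    then show "x \<in> F" using x(3) by simp
  qed
next
  show "F \<subseteq> reductionF T r d F"
    unfolding reductionF_def using FG0 G0_G G0_r G0_d by auto
qed

abbreviation "Y \<equiv> quotient_topology T q (reductionF T r d F)"

lemma qimg: "q ` G \<subseteq> reductionF T r d F" using qF redF by auto

lemma topY: "topspace Y = F" using topspace_quot[OF qimg] redF by simp

lemma contq: "continuous_map T Y q" using cont_quot[OF qimg] .

lemma orb_iff:
  assumes u: "u \<in> G0" and a: "a \<in> G0"
  shows "e u = e a \<longleftrightarrow> (\<exists>y\<in>G. d y = a \<and> r y = u)"
proof
  assume "\<exists>y\<in>G. d y = a \<and> r y = u"
  then obtain y where y: "y \<in> G" "d y = a" "r y = u" by blast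
  have sa: "\<sigma> a \<in> G" "r (\<sigma> a) \<in> F" "d (\<sigma> a) = a" using sig[OF a] by auto
  define z where "z = m (\<sigma> a) (i y)"
  have c: "d (\<sigma> a) = r (i y)" using sa ri[OF y(1)] y by simp
  have z: "z \<in> G" "d z = u" "r z = e a" unfolding z_def e_def
    using mG[OF sa(1) iG[OF y(1)] c] dm[OF sa(1) iG[OF y(1)] c] rm[OF sa(1) iG[OF y(1)] c] di[OF y(1)] y by auto
  have "r z = e u" using orb1[OF u z(1) z(2)] z(3) eF[OF a] by simp
  then show "e u = e a" using z(3) by simp
next
  assume eq: "e u = e a"
  have su: "\<sigma> u \<in> G" "d (\<sigma> u) = u" using sig[OF u] by auto
  have sa: "\<sigma> a \<in> G" "d (\<sigma> a) = a" using sig[OF a] by auto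
  define y where "y = m (i (\<sigma> u)) (\<sigma> a)"
  have c: "d (i (\<sigma> u)) = r (\<sigma> a)" using di[OF su(1)] eq unfolding e_def by simp
  have "y \<in> G \<and> d y = a \<and> r y = u" unfolding y_def
    using mG[OF iG[OF su(1)] sa(1) c] dm[OF iG[OF su(1)] sa(1) c] rm[OF iG[OF su(1)] sa(1) c] ri[OF su(1)] su sa by auto
  then show "\<exists>y\<in>G. d y = a \<and> r y = u" by blast
qed

lemma openY_img:
  assumes A: "openin T0 A"
  shows "openin Y (e ` A)"
proof -
  have AG0: "A \<subseteq> G0" using openin_subset[OF A] by simp
  define SA where "SA = r ` {y \<in> G. d y \<in> A}"
  have "openin T {y \<in> G. d y \<in> A}" using openin_continuous_map_preimage[OF contd0 A] .
  then have SAo: "openin T0 SA" unfolding SA_def using openr unfolding open_map_def by blast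
  have pre: "{x \<in> G. q x \<in> e ` A} = {x \<in> G. r x \<in> SA}"
  proof (intro Collect_cong conj_cong refl)
    fix x assume x: "x \<in> G"
    have "q x \<in> e ` A \<longleftrightarrow> (\<exists>a\<in>A. e (r x) = e a)" using q_e_r[OF x] by auto
    also have "\<dots> \<longleftrightarrow> (\<exists>a\<in>A. \<exists>y\<in>G. d y = a \<and> r y = r x)"
      using orb_iff[OF rG0[OF x]] AG0 by blast
    also have "\<dots> \<longleftrightarrow> r x \<in> SA"
    proof
      assume "\<exists>a\<in>A. \<exists>y\<in>G. d y = a \<and> r y = r x"
      then obtain y where "y \<in> G" "d y \<in> A" "r y = r x" by blast
      then have "y \<in> {y \<in> G. d y \<in> A}" by simp
      then have "r y \<in> SA" unfolding SA_def by (rule imageI)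
      then show "r x \<in> SA" using \<open>r y = r x\<close> by simp
    next
      assume "r x \<in> SA"
      then obtain y where "y \<in> G" "d y \<in> A" "r x = r y" unfolding SA_def by blast
      then show "\<exists>a\<in>A. \<exists>y\<in>G. d y = a \<and> r y = r x" by metis
    qed
    finally show "q x \<in> e ` A \<longleftrightarrow> r x \<in> SA" .
  qed
  have "openin T {x \<in> G. r x \<in> SA}" using openin_continuous_map_preimage[OF contr0 SAo] .
  moreover have "e ` A \<subseteq> reductionF T r d F" using eF AG0 redF by auto
  ultimately show ?thesis unfolding openin_quot pre by simp
qed

end

context gsetup begin

lemma sep:
  assumes u: "u \<in> G0" and v: "v \<in> G0" and W: "openin T W"
    and hW: "\<forall>y\<in>G. r y = u \<and> d y = v \<longrightarrow> y \<in> W"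
  shows "\<exists>A B. openin T0 A \<and> openin T0 B \<and> u \<in> A \<and> v \<in> B \<and> (\<forall>y\<in>G. r y \<in> A \<and> d y \<in> B \<longrightarrow> y \<in> W)"
proof -
  have tT0: "topspace T0 = G0" using G0_G by auto
  have uT: "u \<in> topspace T0" using u tT0 by simp
  have vT: "v \<in> topspace T0" using v tT0 by simp
  have "\<exists>U K. openin T0 U \<and> compactin T0 K \<and> u \<in> U \<and> U \<subseteq> K"
    using LT0[unfolded locally_compact_space_def] uT by (rule bspec)
  then obtain A0 C1 where A0: "openin T0 A0" "compactin T0 C1" "u \<in> A0" "A0 \<subseteq> C1" by blast
  have "\<exists>U K. openin T0 U \<and> compactin T0 K \<and> v \<in> U \<and> U \<subseteq> K"
    using LT0[unfolded locally_compact_space_def] vT by (rule bspec)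
  then obtain B0 C2 where B0: "openin T0 B0" "compactin T0 C2" "v \<in> B0" "B0 \<subseteq> C2" by blast
  define Kc where "Kc = {x \<in> G. (r x, d x) \<in> C1 \<times> C2}"
  have "compactin (prod_topology T0 T0) (C1 \<times> C2)" using A0(2) B0(2) by (simp add: compactin_Times)
  then have Kcc: "compactin T Kc" unfolding Kc_def by (rule propr[unfolded proper_groupoid_def, rule_format])
  define C where "C = (G - W) \<inter> Kc"
  have Cc: "compactin T C" unfolding C_def
    by (rule closed_Int_compactin[OF _ Kcc]) (rule closedin_diff, simp_all add: W)
  define \<Phi> where "\<Phi> x = (r x, d x)" for x
  have cPhi: "continuous_map T (prod_topology T0 T0) \<Phi>"
    unfolding \<Phi>_def by (rule continuous_map_pairedI[OF contr0 contd0])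
  have PC: "compactin (prod_topology T0 T0) (\<Phi> ` C)" using image_compactin[OF Cc cPhi] .
  have HP: "Hausdorff_space (prod_topology T0 T0)" by (simp add: Hausdorff_space_prod_topology HT0)
  have PCc: "closedin (prod_topology T0 T0) (\<Phi> ` C)" using compactin_imp_closedin[OF HP PC] .
  define Ob where "Ob = topspace (prod_topology T0 T0) - \<Phi> ` C"
  have Oo: "openin (prod_topology T0 T0) Ob" unfolding Ob_def by (rule openin_diff[OF openin_topspace PCc])
  have uvO: "(u, v) \<in> Ob"
  proof -
    have "(u, v) \<notin> \<Phi> ` C"
    proof
      assume "(u, v) \<in> \<Phi> ` C"
      then obtain y where y: "y \<in> C" "(u, v) = \<Phi> y" by blast
      then have "y \<in> G" "r y = u" "d y = v" "y \<notin> W" unfolding C_def \<Phi>_def by auto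
      then show False using hW by blast
    qed
    moreover have "(u, v) \<in> topspace (prod_topology T0 T0)" using u v tT0 by simp
    ultimately show ?thesis unfolding Ob_def by blast
  qed
  obtain A1 B1 where AB1: "openin T0 A1" "openin T0 B1" "u \<in> A1" "v \<in> B1" "A1 \<times> B1 \<subseteq> Ob"
    using Oo[unfolded openin_prod_topology_alt, rule_format, OF uvO] by blast
  show ?thesis
  proof (intro exI conjI ballI impI)
    show "openin T0 (A0 \<inter> A1)" using A0(1) AB1(1) by (rule openin_Int)
    show "openin T0 (B0 \<inter> B1)" using B0(1) AB1(2) by (rule openin_Int)
    show "u \<in> A0 \<inter> A1" using A0 AB1 by blast
    show "v \<in> B0 \<inter> B1" using B0 AB1 by blast
  next
    fix y assume y: "y \<in> G" "r y \<in> A0 \<inter> A1 \<and> d y \<in> B0 \<inter> B1"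
    then have "y \<in> Kc" unfolding Kc_def using A0(4) B0(4) by blast
    moreover have "\<Phi> y \<in> Ob" using y AB1(5) unfolding \<Phi>_def by blast
    then have "y \<notin> C" unfolding Ob_def by blast
    ultimately show "y \<in> W" unfolding C_def using y(1) by blast
  qed
qed

lemma Haus_Y: "Hausdorff_space Y"
  unfolding Hausdorff_space_def topY
proof (intro allI impI)
  fix p p' assume H: "p \<in> F \<and> p' \<in> F \<and> p \<noteq> p'"
  have p: "p \<in> G0" and p': "p' \<in> G0" using H FG0 by auto
  have hW: "\<forall>y\<in>G. r y = p \<and> d y = p' \<longrightarrow> y \<in> {}"
  proof (intro ballI impI)
    fix y assume "y \<in> G" "r y = p \<and> d y = p'"
    then have "e p = e p'" using orb_iff[OF p p'] by blast
    then show "y \<in> {}" using H e_F by metis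
  qed
  obtain A B where AB: "openin T0 A" "openin T0 B" "p \<in> A" "p' \<in> B"
    "\<forall>y\<in>G. r y \<in> A \<and> d y \<in> B \<longrightarrow> y \<in> {}"
    using sep[OF p p' openin_empty hW] by blast
  show "\<exists>U V. openin Y U \<and> openin Y V \<and> p \<in> U \<and> p' \<in> V \<and> disjnt U V"
  proof (intro exI conjI)
    show "openin Y (e ` A)" using openY_img[OF AB(1)] .
    show "openin Y (e ` B)" using openY_img[OF AB(2)] .
    have "e p \<in> e ` A" using AB(3) by (rule imageI)
    then show "p \<in> e ` A" using e_F H by simp
    have "e p' \<in> e ` B" using AB(4) by (rule imageI)
    then show "p' \<in> e ` B" using e_F H by simp
    show "disjnt (e ` A) (e ` B)"
      unfolding disjnt_def
    proof (rule ccontr)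
      assume "e ` A \<inter> e ` B \<noteq> {}"
      then obtain a b where ab: "a \<in> A" "b \<in> B" "e a = e b" by blast
      have "A \<subseteq> G0" "B \<subseteq> G0" using openin_subset[OF AB(1)] openin_subset[OF AB(2)] by auto
      then have "a \<in> G0" "b \<in> G0" using ab by auto
      then obtain y where "y \<in> G" "d y = b" "r y = a" using orb_iff[OF \<open>a \<in> G0\<close> \<open>b \<in> G0\<close>] ab(3) by blast
      then show False using AB(5) ab by blast
    qed
  qed
qed

lemma LC_Y: "locally_compact_space Y"
  unfolding locally_compact_space_def topY
proof
  fix p assume pF: "p \<in> F"
  have p: "p \<in> G0" using pF FG0 by auto
  have tT0: "topspace T0 = G0" using G0_G by auto
  have "\<exists>U K. openin T0 U \<and> compactin T0 K \<and> p \<in> U \<and> U \<subseteq> K"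
    using LT0[unfolded locally_compact_space_def] by (rule bspec) (simp add: p G0_G)
  then obtain A K where AK: "openin T0 A" "compactin T0 K" "p \<in> A" "A \<subseteq> K" by blast
  have KG0: "K \<subseteq> G0" and KT: "compactin T K" using AK(2) by (simp_all add: compactin_subtopology)
  show "\<exists>U K. openin Y U \<and> compactin Y K \<and> p \<in> U \<and> U \<subseteq> K"
  proof (intro exI conjI)
    show "openin Y (e ` A)" using openY_img[OF AK(1)] .
    show "compactin Y (q ` K)" using image_compactin[OF KT contq] .
    have "e p \<in> e ` A" using AK(3) by (rule imageI)
    then show "p \<in> e ` A" using e_F pF by simp
    show "e ` A \<subseteq> q ` K"
    proof
      fix z assume "z \<in> e ` A"
      then obtain a where a: "a \<in> A" "z = e a" by blast
      then have "a \<in> K" "a \<in> G0" using AK(4) KG0 by auto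
      then have "q a = e a" using q_e_r[of a] G0_G[of a] G0_r[of a] by simp
      moreover have "q a \<in> q ` K" using \<open>a \<in> K\<close> by (rule imageI)
      ultimately show "z \<in> q ` K" using a by simp
    qed
  qed
qed

end

lemma sum_split_nat: "(\<Sum>k<n1 + n2. F k) = (\<Sum>k<n1. F k) + (\<Sum>k<n2. F (n1 + k))"
  for F :: "nat \<Rightarrow> 'a::comm_monoid_add"
  by (induct n2) (simp_all add: add.assoc)

lemma Cc_of_real:
  assumes "continuous_map X euclideanreal \<phi>" "compactin X (X closure_of {x\<in>topspace X. \<phi> x \<noteq> 0})"
  shows "(\<lambda>x. if x \<in> topspace X then complex_of_real (\<phi> x) else 0) \<in> Cc X"
proof -
  have s: "{x\<in>topspace X. (if x \<in> topspace X then complex_of_real (\<phi> x) else 0) \<noteq> 0} = {x\<in>topspace X. \<phi> x \<noteq> 0}"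
    by auto
  have c: "continuous_map X euclidean (\<lambda>x. complex_of_real (\<phi> x))" using cm_of_real[OF assms(1)] .
  have c2: "continuous_map X euclidean (\<lambda>x. if x \<in> topspace X then complex_of_real (\<phi> x) else 0)"
    by (rule continuous_map_eq[OF c]) simp
  show ?thesis unfolding Cc_def using c2 assms(2) s by simp
qed

lemma Cc_diff:
  assumes H: "Hausdorff_space X" and f: "f \<in> Cc X" and g: "g \<in> Cc X"
  shows "(\<lambda>x. f x - g x) \<in> Cc X"
proof -
  let ?Sf = "X closure_of {x\<in>topspace X. f x \<noteq> 0}"
  let ?Sg = "X closure_of {x\<in>topspace X. g x \<noteq> 0}"
  have cf: "continuous_map X euclidean f" "compactin X ?Sf" "\<forall>x. x \<notin> topspace X \<longrightarrow> f x = 0"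
    using f unfolding Cc_def by auto
  have cg: "continuous_map X euclidean g" "compactin X ?Sg" "\<forall>x. x \<notin> topspace X \<longrightarrow> g x = 0"
    using g unfolding Cc_def by auto
  have K: "compactin X (?Sf \<union> ?Sg)" using cf(2) cg(2) by (rule compactin_Un)
  have Kc: "closedin X (?Sf \<union> ?Sg)" using compactin_imp_closedin[OF H K] .
  have sub: "{x\<in>topspace X. f x - g x \<noteq> 0} \<subseteq> ?Sf \<union> ?Sg"
  proof
    fix x assume x: "x \<in> {x\<in>topspace X. f x - g x \<noteq> 0}"
    then have "x \<in> {x\<in>topspace X. f x \<noteq> 0} \<or> x \<in> {x\<in>topspace X. g x \<noteq> 0}" by auto
    then show "x \<in> ?Sf \<union> ?Sg" using closure_of_subset[of "{x\<in>topspace X. f x \<noteq> 0}" X]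
      closure_of_subset[of "{x\<in>topspace X. g x \<noteq> 0}" X] by blast
  qed
  have cl: "X closure_of {x\<in>topspace X. f x - g x \<noteq> 0} \<subseteq> ?Sf \<union> ?Sg"
    using closure_of_minimal[OF sub Kc] .
  have "compactin X (X closure_of {x\<in>topspace X. f x - g x \<noteq> 0})"
    using closed_compactin[OF K cl] by simp
  moreover have "continuous_map X euclidean (\<lambda>x. f x - g x)" using cf(1) cg(1) by (rule continuous_map_diff)
  moreover have "\<forall>x. x \<notin> topspace X \<longrightarrow> f x - g x = 0" using cf(3) cg(3) by simp
  ultimately show ?thesis unfolding Cc_def by simp
qed

lemma est:
  fixes fx :: complex and w :: "'i \<Rightarrow> real" and c :: "'i \<Rightarrow> complex"
  assumes S: "finite S" and w0: "\<forall>k\<in>S. 0 \<le> w k" and wc: "\<forall>k\<in>S. w k \<noteq> 0 \<longrightarrow> cmod (fx - c k) < \<delta>"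
    and s1: "(\<Sum>k\<in>S. w k) \<le> 1" and sf: "fx \<noteq> 0 \<longrightarrow> (\<Sum>k\<in>S. w k) = 1" and d: "0 \<le> \<delta>"
  shows "cmod (fx - (\<Sum>k\<in>S. of_real (w k) * c k)) \<le> \<delta>"
proof -
  define s where "s = (\<Sum>k\<in>S. w k)"
  have s0: "0 \<le> s" unfolding s_def using w0 by (simp add: sum_nonneg)
  have eq: "fx - (\<Sum>k\<in>S. of_real (w k) * c k) = of_real (1 - s) * fx + (\<Sum>k\<in>S. of_real (w k) * (fx - c k))"
  proof -
    have "(\<Sum>k\<in>S. of_real (w k) * (fx - c k)) = (\<Sum>k\<in>S. of_real (w k) * fx) - (\<Sum>k\<in>S. of_real (w k) * c k)"
      by (simp add: right_diff_distrib sum_subtractf)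
    also have "(\<Sum>k\<in>S. of_real (w k) * fx) = of_real s * fx"
      unfolding s_def by (simp add: sum_distrib_right)
    finally show ?thesis by (simp add: algebra_simps)
  qed
  have z: "of_real (1 - s) * fx = 0"
  proof (cases "fx = 0")
    case False
    then have "s = 1" using sf unfolding s_def by simp
    then show ?thesis by simp
  qed simp
  have "cmod (\<Sum>k\<in>S. of_real (w k) * (fx - c k)) \<le> (\<Sum>k\<in>S. cmod (of_real (w k) * (fx - c k)))"
    by (rule norm_sum)
  also have "\<dots> \<le> (\<Sum>k\<in>S. w k * \<delta>)"
  proof (rule sum_mono)
    fix k assume k: "k \<in> S"
    have "cmod (of_real (w k) * (fx - c k)) = w k * cmod (fx - c k)"
      using w0 k by (simp add: norm_mult)
    also have "\<dots> \<le> w k * \<delta>"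
    proof (cases "w k = 0")
      case True then show ?thesis by simp
    next
      case False then show ?thesis using wc k w0 by (intro mult_left_mono) auto
    qed
    finally show "cmod (of_real (w k) * (fx - c k)) \<le> w k * \<delta>" .
  qed
  also have "\<dots> = s * \<delta>" unfolding s_def by (simp add: sum_distrib_right)
  also have "\<dots> \<le> \<delta>" using s1 d s0 unfolding s_def by (simp add: mult_left_le_one_le)
  finally show ?thesis unfolding eq z by simp
qed

context gsetup begin

abbreviation "CS \<equiv> Csigma T r d m i F \<sigma>"

definition rep :: "nat \<Rightarrow> (nat \<Rightarrow> complex) \<Rightarrow> (nat \<Rightarrow> 'g \<Rightarrow> complex) \<Rightarrow> (nat \<Rightarrow> 'g \<Rightarrow> complex) \<Rightarrow> (nat \<Rightarrow> 'g \<Rightarrow> complex) \<Rightarrow> 'g \<Rightarrow> complex"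
  where "rep n c g1 g g2 = (\<lambda>x. if x \<in> G then (\<Sum>k<n. c k * g1 k (r x) * g k (q x) * g2 k (d x)) else 0)"

lemma CS_iff: "f \<in> CS \<longleftrightarrow> (\<exists>n c g1 g g2. (\<forall>k<n. g1 k \<in> Cc T0 \<and> g2 k \<in> Cc T0 \<and> g k \<in> Cc Y) \<and> f = rep n c g1 g g2)"
  unfolding Csigma_def rep_def by simp

lemma CS_intro:
  assumes "\<forall>k<n. g1 k \<in> Cc T0 \<and> g2 k \<in> Cc T0 \<and> g k \<in> Cc Y"
  shows "rep n c g1 g g2 \<in> CS"
  unfolding CS_iff
  apply (rule exI[of _ n], rule exI[of _ c], rule exI[of _ g1], rule exI[of _ g], rule exI[of _ g2])
  using assms by simp

lemma CS_single:
  assumes "g1 \<in> Cc T0" "g2 \<in> Cc T0" "g \<in> Cc Y"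
  shows "(\<lambda>x. if x \<in> G then c * g1 (r x) * g (q x) * g2 (d x) else 0) \<in> CS"
proof -
  have eq: "(\<lambda>x. if x \<in> G then c * g1 (r x) * g (q x) * g2 (d x) else 0) = rep (Suc 0) (\<lambda>_. c) (\<lambda>_. g1) (\<lambda>_. g) (\<lambda>_. g2)"
    unfolding rep_def by (rule ext) simp
  have "rep (Suc 0) (\<lambda>_. c) (\<lambda>_. g1) (\<lambda>_. g) (\<lambda>_. g2) \<in> CS"
    by (rule CS_intro) (use assms in simp)
  then show ?thesis unfolding eq .
qed

lemma CS_zero: "(\<lambda>x. 0) \<in> CS"
proof -
  have "rep 0 (\<lambda>_. 0) (\<lambda>_. (\<lambda>_. 0)) (\<lambda>_. (\<lambda>_. 0)) (\<lambda>_. (\<lambda>_. 0)) \<in> CS"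
    by (rule CS_intro) simp
  moreover have "rep 0 (\<lambda>_. 0) (\<lambda>_. (\<lambda>_. 0)) (\<lambda>_. (\<lambda>_. 0)) (\<lambda>_. (\<lambda>_. 0)) = (\<lambda>x. 0)"
    unfolding rep_def by (rule ext) simp
  ultimately show ?thesis by simp
qed

lemma CS_add:
  assumes f: "f \<in> CS" and h: "h \<in> CS"
  shows "(\<lambda>x. f x + h x) \<in> CS"
proof -
  obtain n1 c1 a1 b1 e1 where 1: "\<forall>k<n1. a1 k \<in> Cc T0 \<and> e1 k \<in> Cc T0 \<and> b1 k \<in> Cc Y"
    "f = rep n1 c1 a1 b1 e1"
    using f unfolding CS_iff by blast
  obtain n2 c2 a2 b2 e2 where 2: "\<forall>k<n2. a2 k \<in> Cc T0 \<and> e2 k \<in> Cc T0 \<and> b2 k \<in> Cc Y"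
    "h = rep n2 c2 a2 b2 e2"
    using h unfolding CS_iff by blast
  define c where "c k = (if k < n1 then c1 k else c2 (k - n1))" for k
  define a where "a k = (if k < n1 then a1 k else a2 (k - n1))" for k
  define b where "b k = (if k < n1 then b1 k else b2 (k - n1))" for k
  define e where "e k = (if k < n1 then e1 k else e2 (k - n1))" for k
  have "\<forall>k<n1 + n2. a k \<in> Cc T0 \<and> e k \<in> Cc T0 \<and> b k \<in> Cc Y"
    using 1(1) 2(1) unfolding a_def b_def e_def by auto
  moreover have "(\<lambda>x. f x + h x) = rep (n1 + n2) c a b e"
    unfolding 1(2) 2(2) rep_def sum_split_nat by (rule ext) (auto simp: a_def b_def c_def e_def)
  ultimately show ?thesis using CS_intro by simp
qed

lemma CS_sum:
  assumes "finite S" "\<forall>s\<in>S. f s \<in> CS"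
  shows "(\<lambda>x. \<Sum>s\<in>S. f s x) \<in> CS"
  using assms
proof (induct S rule: finite_induct)
  case empty then show ?case using CS_zero by simp
next
  case (insert s S)
  have "(\<lambda>x. f s x + (\<Sum>s\<in>S. f s x)) \<in> CS"
    using CS_add[of "f s" "\<lambda>x. \<Sum>s\<in>S. f s x"] insert by simp
  then show ?case using insert by simp
qed

lemma CS_Cc: "CS \<subseteq> Cc T"
proof
  fix f assume "f \<in> CS"
  then obtain n c a b e where 1: "\<forall>k<n. a k \<in> Cc T0 \<and> e k \<in> Cc T0 \<and> b k \<in> Cc Y"
    and fe0: "f = rep n c a b e"
    using \<open>f \<in> CS\<close> unfolding CS_iff by blast
  have fe: "f = (\<lambda>x. if x \<in> G then (\<Sum>k<n. c k * a k (r x) * b k (q x) * e k (d x)) else 0)"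
    using fe0 unfolding rep_def .
  have ca: "continuous_map T0 euclidean (a k)" "compactin T0 (T0 closure_of {w\<in>topspace T0. a k w \<noteq> 0})"
    if "k < n" for k using 1 that unfolding Cc_def by auto
  have ce: "continuous_map T0 euclidean (e k)" "compactin T0 (T0 closure_of {w\<in>topspace T0. e k w \<noteq> 0})"
    if "k < n" for k using 1 that unfolding Cc_def by auto
  have cb: "continuous_map Y euclidean (b k)" if "k < n" for k using 1 that unfolding Cc_def by auto
  have trm: "continuous_map T euclidean (\<lambda>x. c k * a k (r x) * b k (q x) * e k (d x))" if k: "k < n" for k
  proof -
    have 1: "continuous_map T euclidean (\<lambda>x. a k (r x))"
      using continuous_map_compose[OF contr0 ca(1)[OF k]] by (simp add: o_def)
    have 2: "continuous_map T euclidean (\<lambda>x. b k (q x))"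
      using continuous_map_compose[OF contq cb[OF k]] by (simp add: o_def)
    have 3: "continuous_map T euclidean (\<lambda>x. e k (d x))"
      using continuous_map_compose[OF contd0 ce(1)[OF k]] by (simp add: o_def)
    show ?thesis by (intro cm_mult 1 2 3 continuous_map_const[THEN iffD2]) simp
  qed
  have cs: "continuous_map T euclidean (\<lambda>x. (\<Sum>k<n. c k * a k (r x) * b k (q x) * e k (d x)))"
    by (rule continuous_map_sum) (use trm in auto)
  have cf: "continuous_map T euclidean f"
    unfolding fe by (rule continuous_map_eq[OF cs]) simp
  define Kk where "Kk k = {x \<in> G. (r x, d x) \<in> (T0 closure_of {w\<in>topspace T0. a k w \<noteq> 0}) \<times> (T0 closure_of {w\<in>topspace T0. e k w \<noteq> 0})}" for k
  have Kkc: "compactin T (Kk k)" if "k < n" for k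
  proof -
    have "compactin (prod_topology T0 T0) ((T0 closure_of {w\<in>topspace T0. a k w \<noteq> 0}) \<times> (T0 closure_of {w\<in>topspace T0. e k w \<noteq> 0}))"
      using ca(2)[OF that] ce(2)[OF that] by (simp add: compactin_Times)
    then show ?thesis unfolding Kk_def by (rule propr[unfolded proper_groupoid_def, rule_format])
  qed
  define K where "K = \<Union>(Kk ` {..<n})"
  have Kc: "compactin T K" unfolding K_def by (rule compactin_Union) (use Kkc in auto)
  have Kcl: "closedin T K" using compactin_imp_closedin[OF HT Kc] .
  have sub: "{x \<in> G. f x \<noteq> 0} \<subseteq> K"
  proof
    fix x assume "x \<in> {x \<in> G. f x \<noteq> 0}"
    then have x: "x \<in> G" "(\<Sum>k<n. c k * a k (r x) * b k (q x) * e k (d x)) \<noteq> 0" unfolding fe by auto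
    then obtain k where k: "k < n" "c k * a k (r x) * b k (q x) * e k (d x) \<noteq> 0"
      by (meson lessThan_iff sum.neutral)
    have "r x \<in> topspace T0" "d x \<in> topspace T0" using rG0[OF x(1)] dG0[OF x(1)] G0_G by auto
    then have "r x \<in> {w\<in>topspace T0. a k w \<noteq> 0}" "d x \<in> {w\<in>topspace T0. e k w \<noteq> 0}" using k(2) by auto
    then have "r x \<in> T0 closure_of {w\<in>topspace T0. a k w \<noteq> 0}" "d x \<in> T0 closure_of {w\<in>topspace T0. e k w \<noteq> 0}"
      using closure_of_subset[of "{w\<in>topspace T0. a k w \<noteq> 0}" T0] closure_of_subset[of "{w\<in>topspace T0. e k w \<noteq> 0}" T0]
      by auto
    then have "x \<in> Kk k" unfolding Kk_def using x(1) by simp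
    then show "x \<in> K" unfolding K_def using k(1) by blast
  qed
  have "T closure_of {x \<in> G. f x \<noteq> 0} \<subseteq> K" using closure_of_minimal[OF sub Kcl] .
  then have "compactin T (T closure_of {x \<in> G. f x \<noteq> 0})" using closed_compactin[OF Kc] by simp
  moreover have "\<forall>x. x \<notin> G \<longrightarrow> f x = 0" unfolding fe by simp
  ultimately show "f \<in> Cc T" unfolding Cc_def using cf by simp
qed

end

context gsetup begin

lemma tT0: "topspace T0 = G0" using G0_G by auto

lemma dense: "dense_ind_lim T CS"
  unfolding dense_ind_lim_def
proof (intro conjI ballI allI impI)
  show "CS \<subseteq> Cc T" by (rule CS_Cc)
next
  fix f U assume fC: "f \<in> Cc T" and U: "ind_lim_zero_nbhd T U"
  define Kf where "Kf = T closure_of {x\<in>G. f x \<noteq> 0}"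
  have fcont: "continuous_map T euclidean f" and Kfc: "compactin T Kf" and f0: "\<forall>x. x \<notin> G \<longrightarrow> f x = 0"
    using fC unfolding Cc_def Kf_def by auto
  have KfG: "Kf \<subseteq> G" unfolding Kf_def by (rule closure_of_subset_topspace)
  have fKf: "x \<in> Kf" if "x \<in> G" "f x \<noteq> 0" for x
    using closure_of_subset[of "{x\<in>G. f x \<noteq> 0}" T] that unfolding Kf_def by auto
  define P where "P = r ` Kf \<union> d ` Kf"
  have Pc: "compactin T0 P" unfolding P_def
    by (rule compactin_Un[OF image_compactin[OF Kfc contr0] image_compactin[OF Kfc contd0]])
  have PG0: "P \<subseteq> G0" unfolding P_def using KfG rG0 dG0 by auto
  have "\<exists>U L. openin T0 U \<and> compactin T0 L \<and> closedin T0 L \<and> P \<subseteq> U \<and> U \<subseteq> L"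
    using LT0 Pc unfolding locally_compact_space_compact_closed_compact[OF disjI1[OF HT0]] by meson
  then obtain V Q where V: "openin T0 V" and Qc: "compactin T0 Q" and PV: "P \<subseteq> V" and VQ: "V \<subseteq> Q"
    by blast
  have VG0: "V \<subseteq> G0" using openin_subset[OF V] tT0 by simp
  define K' where "K' = {x \<in> G. (r x, d x) \<in> Q \<times> Q}"
  have "compactin (prod_topology T0 T0) (Q \<times> Q)" using Qc by (simp add: compactin_Times)
  then have K'c: "compactin T K'" unfolding K'_def by (rule propr[unfolded proper_groupoid_def, rule_format])
  have "\<exists>\<epsilon>>0. \<forall>g\<in>Cc T. {x \<in> G. g x \<noteq> 0} \<subseteq> K' \<and> (\<forall>x. cmod (g x) < \<epsilon>) \<longrightarrow> g \<in> U"
    using U K'c unfolding ind_lim_zero_nbhd_def by blast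
  then obtain \<epsilon> where ep: "\<epsilon> > 0" and Ue: "\<forall>g\<in>Cc T. {x \<in> G. g x \<noteq> 0} \<subseteq> K' \<and> (\<forall>x. cmod (g x) < \<epsilon>) \<longrightarrow> g \<in> U"
    by blast
  define \<delta> where "\<delta> = \<epsilon> / 2"
  have dp: "\<delta> > 0" "\<delta> < \<epsilon>" unfolding \<delta>_def using ep by auto

  have rect: "\<forall>uv\<in>P \<times> P. \<exists>t. openin T0 (fst t) \<and> openin T0 (fst (snd t)) \<and> fst uv \<in> fst t \<and> snd uv \<in> fst (snd t) \<and>
      (\<forall>y\<in>G. r y \<in> fst t \<and> d y \<in> fst (snd t) \<longrightarrow> cmod (f y - snd (snd t)) < \<delta>)"
  proof
    fix uv assume "uv \<in> P \<times> P"
    then obtain u v where uv: "uv = (u, v)" "u \<in> P" "v \<in> P" by blast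
    have u: "u \<in> G0" and v: "v \<in> G0" using uv PG0 by auto
    obtain c where hc: "\<forall>y\<in>G. r y = u \<and> d y = v \<longrightarrow> cmod (f y - c) < \<delta>"
    proof (cases "\<exists>x\<in>G. r x = u \<and> d x = v")
      case True
      then obtain x where x: "x \<in> G" "r x = u" "d x = v" by blast
      have "\<forall>y\<in>G. r y = u \<and> d y = v \<longrightarrow> cmod (f y - f x) < \<delta>"
      proof (intro ballI impI)
        fix y assume "y \<in> G" "r y = u \<and> d y = v"
        then have "y = x" using inj_rd[of y x] x by simp
        then show "cmod (f y - f x) < \<delta>" using dp by simp
      qed
      then show ?thesis by (rule that)
    next
      case False
      then have "\<forall>y\<in>G. r y = u \<and> d y = v \<longrightarrow> cmod (f y - 0) < \<delta>" by blast
      then show ?thesis by (rule that)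
    qed
    define W where "W = {y \<in> G. f y \<in> ball c \<delta>}"
    have Wo: "openin T W" unfolding W_def
      by (rule openin_continuous_map_preimage[OF fcont]) simp
    have hW: "\<forall>y\<in>G. r y = u \<and> d y = v \<longrightarrow> y \<in> W"
      using hc unfolding W_def by (simp add: dist_norm norm_minus_commute)
    obtain A B where AB: "openin T0 A" "openin T0 B" "u \<in> A" "v \<in> B" "\<forall>y\<in>G. r y \<in> A \<and> d y \<in> B \<longrightarrow> y \<in> W"
      using sep[OF u v Wo hW] by blast
    have "\<forall>y\<in>G. r y \<in> A \<and> d y \<in> B \<longrightarrow> cmod (f y - c) < \<delta>"
      using AB(5) unfolding W_def by (simp add: dist_norm norm_minus_commute)
    then show "\<exists>t. openin T0 (fst t) \<and> openin T0 (fst (snd t)) \<and> fst uv \<in> fst t \<and> snd uv \<in> fst (snd t) \<and>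
      (\<forall>y\<in>G. r y \<in> fst t \<and> d y \<in> fst (snd t) \<longrightarrow> cmod (f y - snd (snd t)) < \<delta>)"
      using AB uv by (intro exI[of _ "(A, B, c)"]) simp
  qed
  then obtain ch where ch: "\<forall>uv\<in>P \<times> P. openin T0 (fst (ch uv)) \<and> openin T0 (fst (snd (ch uv))) \<and> fst uv \<in> fst (ch uv) \<and> snd uv \<in> fst (snd (ch uv)) \<and>
      (\<forall>y\<in>G. r y \<in> fst (ch uv) \<and> d y \<in> fst (snd (ch uv)) \<longrightarrow> cmod (f y - snd (snd (ch uv))) < \<delta>)"
    by (rule bchoice[elim_format]) blast
  define AA where "AA u v = fst (ch (u, v))" for u v
  define BB where "BB u v = fst (snd (ch (u, v)))" for u v
  define cc where "cc u v = snd (snd (ch (u, v)))" for u v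
  have AB: "openin T0 (AA u v) \<and> openin T0 (BB u v) \<and> u \<in> AA u v \<and> v \<in> BB u v \<and>
      (\<forall>y\<in>G. r y \<in> AA u v \<and> d y \<in> BB u v \<longrightarrow> cmod (f y - cc u v) < \<delta>)" if "u \<in> P" "v \<in> P" for u v
  proof -
    have "(u, v) \<in> P \<times> P" using that by simp
    then show ?thesis using ch unfolding AA_def BB_def cc_def by (metis fst_conv snd_conv)
  qed

  have "\<forall>u\<in>P. \<exists>D. finite D \<and> D \<subseteq> P \<and> P \<subseteq> (\<Union>v\<in>D. BB u v)"
  proof
    fix u assume u: "u \<in> P"
    have "\<exists>\<F>. finite \<F> \<and> \<F> \<subseteq> BB u ` P \<and> P \<subseteq> \<Union>\<F>"
    proof (rule compactinD[OF Pc])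
      show "openin T0 B" if "B \<in> BB u ` P" for B using that AB[OF u] by blast
      show "P \<subseteq> \<Union> (BB u ` P)" using AB[OF u] by blast
    qed
    then obtain \<F> where F: "finite \<F>" "\<F> \<subseteq> BB u ` P" "P \<subseteq> \<Union>\<F>" by blast
    obtain D where "D \<subseteq> P" "finite D" "\<F> = BB u ` D"
      using finite_subset_image[OF F(1) F(2)] by blast
    then show "\<exists>D. finite D \<and> D \<subseteq> P \<and> P \<subseteq> (\<Union>v\<in>D. BB u v)" using F(3) by blast
  qed
  then obtain Dv where Dv: "\<forall>u\<in>P. finite (Dv u) \<and> Dv u \<subseteq> P \<and> P \<subseteq> (\<Union>v\<in>Dv u. BB u v)"
    by (rule bchoice[elim_format]) blast
  define NN where "NN u = V \<inter> ((\<Inter>v\<in>Dv u. AA u v) \<inter> topspace T0)" for u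
  have NNo: "openin T0 (NN u)" if "u \<in> P" for u
    unfolding NN_def
  proof (rule openin_Int[OF V], rule openin_INT)
    show "finite (Dv u)" using Dv that by blast
    show "openin T0 (AA u v)" if "v \<in> Dv u" for v using AB Dv \<open>u \<in> P\<close> that by blast
  qed
  have uNN: "u \<in> NN u" if "u \<in> P" for u
  proof -
    have "u \<in> AA u v" if "v \<in> Dv u" for v using AB Dv \<open>u \<in> P\<close> that by blast
    moreover have "u \<in> V" using PV that by blast
    moreover have "u \<in> topspace T0" using PG0 tT0 that by blast
    ultimately show ?thesis unfolding NN_def by blast
  qed
  have NNsub: "NN u \<subseteq> AA u v" if "v \<in> Dv u" for u v unfolding NN_def using that by blast
  have NNV: "NN u \<subseteq> V" for u unfolding NN_def by blast
  have "\<exists>\<F>. finite \<F> \<and> \<F> \<subseteq> NN ` P \<and> P \<subseteq> \<Union>\<F>"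
  proof (rule compactinD[OF Pc])
    show "openin T0 B" if "B \<in> NN ` P" for B using that NNo by blast
    show "P \<subseteq> \<Union> (NN ` P)" using uNN by blast
  qed
  then obtain \<F> where F: "finite \<F>" "\<F> \<subseteq> NN ` P" "P \<subseteq> \<Union>\<F>" by blast
  obtain Du where Du: "Du \<subseteq> P" "finite Du" "\<F> = NN ` Du"
    using finite_subset_image[OF F(1) F(2)] by blast
  have PNN: "P \<subseteq> (\<Union>u\<in>Du. NN u)" using F(3) Du(3) by simp
  have "\<exists>\<phi>. (\<forall>u\<in>Du. continuous_map T0 euclideanreal (\<phi> u)) \<and> (\<forall>u\<in>Du. \<forall>x. 0 \<le> \<phi> u x) \<and>
     (\<forall>u\<in>Du. compactin T0 (T0 closure_of {x\<in>topspace T0. \<phi> u x \<noteq> 0})) \<and>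
     (\<forall>u\<in>Du. \<forall>x\<in>topspace T0. \<phi> u x \<noteq> 0 \<longrightarrow> x \<in> NN u) \<and>
     (\<forall>x. (\<Sum>u\<in>Du. \<phi> u x) \<le> 1) \<and> (\<forall>x\<in>P. (\<Sum>u\<in>Du. \<phi> u x) = 1)"
    by (rule partition_unity[OF LT0 HT0 Pc Du(2) _ PNN]) (use NNo Du(1) in blast)
  then obtain \<phi> where ph: "\<forall>u\<in>Du. continuous_map T0 euclideanreal (\<phi> u)" "\<forall>u\<in>Du. \<forall>x. 0 \<le> \<phi> u x"
     "\<forall>u\<in>Du. compactin T0 (T0 closure_of {x\<in>topspace T0. \<phi> u x \<noteq> 0})"
     "\<forall>u\<in>Du. \<forall>x\<in>topspace T0. \<phi> u x \<noteq> 0 \<longrightarrow> x \<in> NN u"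
     "\<forall>x. (\<Sum>u\<in>Du. \<phi> u x) \<le> 1" "\<forall>x\<in>P. (\<Sum>u\<in>Du. \<phi> u x) = 1"
    by blast
  have "\<forall>u\<in>Du. \<exists>\<psi>. (\<forall>v\<in>Dv u. continuous_map T0 euclideanreal (\<psi> v)) \<and> (\<forall>v\<in>Dv u. \<forall>x. 0 \<le> \<psi> v x) \<and>
     (\<forall>v\<in>Dv u. compactin T0 (T0 closure_of {x\<in>topspace T0. \<psi> v x \<noteq> 0})) \<and>
     (\<forall>v\<in>Dv u. \<forall>x\<in>topspace T0. \<psi> v x \<noteq> 0 \<longrightarrow> x \<in> BB u v \<inter> V) \<and>
     (\<forall>x. (\<Sum>v\<in>Dv u. \<psi> v x) \<le> 1) \<and> (\<forall>x\<in>P. (\<Sum>v\<in>Dv u. \<psi> v x) = 1)"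
  proof
    fix u assume uD: "u \<in> Du"
    then have u: "u \<in> P" using Du(1) by blast
    show "\<exists>\<psi>. (\<forall>v\<in>Dv u. continuous_map T0 euclideanreal (\<psi> v)) \<and> (\<forall>v\<in>Dv u. \<forall>x. 0 \<le> \<psi> v x) \<and>
     (\<forall>v\<in>Dv u. compactin T0 (T0 closure_of {x\<in>topspace T0. \<psi> v x \<noteq> 0})) \<and>
     (\<forall>v\<in>Dv u. \<forall>x\<in>topspace T0. \<psi> v x \<noteq> 0 \<longrightarrow> x \<in> BB u v \<inter> V) \<and>
     (\<forall>x. (\<Sum>v\<in>Dv u. \<psi> v x) \<le> 1) \<and> (\<forall>x\<in>P. (\<Sum>v\<in>Dv u. \<psi> v x) = 1)"
    proof (rule partition_unity[OF LT0 HT0 Pc])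
      show "finite (Dv u)" using Dv u by blast
      show "\<forall>v\<in>Dv u. openin T0 (BB u v \<inter> V)"
      proof
        fix v assume "v \<in> Dv u"
        then have "v \<in> P" using Dv u by blast
        then show "openin T0 (BB u v \<inter> V)" using AB[OF u] V by (simp add: openin_Int)
      qed
      show "P \<subseteq> (\<Union>v\<in>Dv u. BB u v \<inter> V)" using Dv u PV by blast
    qed
  qed
  then obtain \<psi> where ps: "\<forall>u\<in>Du. (\<forall>v\<in>Dv u. continuous_map T0 euclideanreal (\<psi> u v)) \<and> (\<forall>v\<in>Dv u. \<forall>x. 0 \<le> \<psi> u v x) \<and>
     (\<forall>v\<in>Dv u. compactin T0 (T0 closure_of {x\<in>topspace T0. \<psi> u v x \<noteq> 0})) \<and>
     (\<forall>v\<in>Dv u. \<forall>x\<in>topspace T0. \<psi> u v x \<noteq> 0 \<longrightarrow> x \<in> BB u v \<inter> V) \<and>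
     (\<forall>x. (\<Sum>v\<in>Dv u. \<psi> u v x) \<le> 1) \<and> (\<forall>x\<in>P. (\<Sum>v\<in>Dv u. \<psi> u v x) = 1)"
    by (rule bchoice[elim_format]) blast
  have qK'Y: "q ` K' \<subseteq> topspace Y" using qF topY unfolding K'_def by auto
  have "\<exists>\<phi>. continuous_map Y euclideanreal \<phi> \<and> (\<forall>x. 0 \<le> \<phi> x \<and> \<phi> x \<le> 1) \<and> (\<forall>x\<in>q ` K'. \<phi> x = 1) \<and>
    compactin Y (Y closure_of {x\<in>topspace Y. \<phi> x \<noteq> 0}) \<and> (\<forall>x\<in>topspace Y. \<phi> x \<noteq> 0 \<longrightarrow> x \<in> topspace Y)"
    by (rule bump_ex[OF LC_Y Haus_Y image_compactin[OF K'c contq] openin_topspace qK'Y])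
  then obtain hh where hh: "continuous_map Y euclideanreal hh" "\<forall>x\<in>q ` K'. hh x = 1"
    "compactin Y (Y closure_of {x\<in>topspace Y. hh x \<noteq> 0})" by blast
  define g1 where "g1 u = (\<lambda>w. if w \<in> topspace T0 then complex_of_real (\<phi> u w) else 0)" for u
  define g2 where "g2 u v = (\<lambda>w. if w \<in> topspace T0 then complex_of_real (\<psi> u v w) else 0)" for u v
  define gh where "gh = (\<lambda>p. if p \<in> topspace Y then complex_of_real (hh p) else 0)"
  have g1C: "g1 u \<in> Cc T0" if "u \<in> Du" for u unfolding g1_def by (rule Cc_of_real) (use ph that in blast)+
  have g2C: "g2 u v \<in> Cc T0" if "u \<in> Du" "v \<in> Dv u" for u v unfolding g2_def by (rule Cc_of_real) (use ps that in blast)+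
  have ghC: "gh \<in> Cc Y" unfolding gh_def by (rule Cc_of_real) (use hh in blast)+
  define S where "S = Sigma Du Dv"
  have Sfin: "finite S" unfolding S_def using Du(2) Dv Du(1) by (intro finite_SigmaI) blast+
  define tm where "tm p x = (if x \<in> G then cc (fst p) (snd p) * g1 (fst p) (r x) * gh (q x) * g2 (fst p) (snd p) (d x) else 0)" for p x
  define a where "a x = (\<Sum>p\<in>S. tm p x)" for x
  have aCS: "a \<in> CS"
  proof -
    have "(\<lambda>x. \<Sum>p\<in>S. tm p x) \<in> CS"
    proof (rule CS_sum[OF Sfin], rule ballI)
      fix p assume "p \<in> S"
      then have "fst p \<in> Du" "snd p \<in> Dv (fst p)" unfolding S_def by auto
      then show "tm p \<in> CS" unfolding tm_def[abs_def]
        by (intro CS_single g1C g2C ghC)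
    qed
    then show ?thesis unfolding a_def[abs_def] .
  qed
  define w where "w x p = \<phi> (fst p) (r x) * \<psi> (fst p) (snd p) (d x)" for x p
  have wV: "r x \<in> NN (fst p) \<and> d x \<in> BB (fst p) (snd p) \<inter> V" if "x \<in> G" "p \<in> S" "w x p \<noteq> 0" for x p
  proof -
    have p: "fst p \<in> Du" "snd p \<in> Dv (fst p)" using that(2) unfolding S_def by auto
    have "\<phi> (fst p) (r x) \<noteq> 0" "\<psi> (fst p) (snd p) (d x) \<noteq> 0" using that(3) unfolding w_def by auto
    moreover have "r x \<in> topspace T0" "d x \<in> topspace T0" using rG0 dG0 that(1) tT0 by auto
    ultimately show ?thesis using ph(4) ps p by blast
  qed
  have tm_eq: "tm p x = complex_of_real (w x p) * cc (fst p) (snd p)" if "x \<in> G" "p \<in> S" for x p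
  proof (cases "w x p = 0")
    case True
    have "r x \<in> topspace T0" "d x \<in> topspace T0" using rG0 dG0 that(1) tT0 by auto
    then show ?thesis using True that(1) unfolding tm_def g1_def g2_def w_def by auto
  next
    case False
    have "r x \<in> Q" "d x \<in> Q" using wV[OF that False] NNV VQ by blast+
    then have "x \<in> K'" unfolding K'_def using that(1) by simp
    then have "q x \<in> q ` K'" by (rule imageI)
    then have "gh (q x) = 1" using hh(2) qK'Y unfolding gh_def by auto
    moreover have "r x \<in> topspace T0" "d x \<in> topspace T0" using rG0 dG0 that(1) tT0 by auto
    ultimately show ?thesis using that(1) unfolding tm_def g1_def g2_def w_def by simp
  qed
  have a_eq: "a x = (\<Sum>p\<in>S. complex_of_real (w x p) * cc (fst p) (snd p))" if "x \<in> G" for x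
    unfolding a_def using tm_eq[OF that] by (intro sum.cong) auto
  have w0: "0 \<le> w x p" if "p \<in> S" for x p
  proof -
    have p: "fst p \<in> Du" "snd p \<in> Dv (fst p)" using that unfolding S_def by auto
    then show ?thesis unfolding w_def using ph(2) ps by (intro mult_nonneg_nonneg) blast+
  qed
  have wsum: "(\<Sum>p\<in>S. w x p) = (\<Sum>u\<in>Du. \<phi> u (r x) * (\<Sum>v\<in>Dv u. \<psi> u v (d x)))" for x
  proof -
    have fD: "\<forall>u\<in>Du. finite (Dv u)" using Dv Du(1) by blast
    have "(\<Sum>u\<in>Du. \<Sum>v\<in>Dv u. \<phi> u (r x) * \<psi> u v (d x)) = (\<Sum>(u, v)\<in>Sigma Du Dv. \<phi> u (r x) * \<psi> u v (d x))"
      by (rule sum.Sigma[OF Du(2) fD])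
    also have "\<dots> = (\<Sum>p\<in>S. w x p)" unfolding S_def w_def by (simp add: split_def)
    finally show ?thesis by (simp add: sum_distrib_left)
  qed
  have ws1: "(\<Sum>p\<in>S. w x p) \<le> 1" for x
  proof -
    have "(\<Sum>u\<in>Du. \<phi> u (r x) * (\<Sum>v\<in>Dv u. \<psi> u v (d x))) \<le> (\<Sum>u\<in>Du. \<phi> u (r x))"
    proof (rule sum_mono)
      fix u assume "u \<in> Du"
      then show "\<phi> u (r x) * (\<Sum>v\<in>Dv u. \<psi> u v (d x)) \<le> \<phi> u (r x)"
        using ph(2) ps by (intro mult_left_le) blast+
    qed
    then show ?thesis unfolding wsum using ph(5) by (meson order_trans)
  qed
  have wsP: "(\<Sum>p\<in>S. w x p) = 1" if "r x \<in> P" "d x \<in> P" for x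
  proof -
    have "(\<Sum>u\<in>Du. \<phi> u (r x) * (\<Sum>v\<in>Dv u. \<psi> u v (d x))) = (\<Sum>u\<in>Du. \<phi> u (r x))"
      using ps that(2) by (intro sum.cong) auto
    then show ?thesis unfolding wsum using ph(6) that(1) by simp
  qed
  have est_x: "cmod (f x - a x) \<le> \<delta>" if x: "x \<in> G" for x
    unfolding a_eq[OF x]
  proof (rule est[OF Sfin])
    show "\<forall>k\<in>S. 0 \<le> w x k" using w0 by blast
    show "\<forall>k\<in>S. w x k \<noteq> 0 \<longrightarrow> cmod (f x - cc (fst k) (snd k)) < \<delta>"
    proof (intro ballI impI)
      fix p assume p: "p \<in> S" "w x p \<noteq> 0"
      have pp: "fst p \<in> Du" "snd p \<in> Dv (fst p)" using p(1) unfolding S_def by auto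
      have uP: "fst p \<in> P" using pp Du(1) by blast
      have vP: "snd p \<in> P" using pp uP Dv by blast
      have "r x \<in> AA (fst p) (snd p)" using wV[OF x p] NNsub[OF pp(2)] by blast
      moreover have "d x \<in> BB (fst p) (snd p)" using wV[OF x p] by blast
      moreover have H: "\<forall>y\<in>G. r y \<in> AA (fst p) (snd p) \<and> d y \<in> BB (fst p) (snd p) \<longrightarrow> cmod (f y - cc (fst p) (snd p)) < \<delta>"
        using AB[OF uP vP] by blast
      ultimately show "cmod (f x - cc (fst p) (snd p)) < \<delta>" using x by blast
    qed
    show "(\<Sum>k\<in>S. w x k) \<le> 1" by (rule ws1)
    show "f x \<noteq> 0 \<longrightarrow> (\<Sum>k\<in>S. w x k) = 1"
    proof
      assume "f x \<noteq> 0"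
      then have "x \<in> Kf" using fKf x by blast
      then have "r x \<in> P" "d x \<in> P" unfolding P_def by auto
      then show "(\<Sum>k\<in>S. w x k) = 1" by (rule wsP)
    qed
    show "0 \<le> \<delta>" using dp by simp
  qed
  have aC: "a \<in> Cc T" using aCS CS_Cc by blast
  have a0: "a x = 0" if "x \<notin> G" for x using aC that unfolding Cc_def by auto
  have gC: "(\<lambda>x. f x - a x) \<in> Cc T" using Cc_diff[OF HT fC aC] .
  have gsupp: "{x \<in> G. f x - a x \<noteq> 0} \<subseteq> K'"
  proof
    fix x assume "x \<in> {x \<in> G. f x - a x \<noteq> 0}"
    then have x: "x \<in> G" "f x \<noteq> 0 \<or> a x \<noteq> 0" by auto
    show "x \<in> K'"
    proof (cases "f x \<noteq> 0")
      case True
      then have "x \<in> Kf" using fKf x by blast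
      then have "r x \<in> P" "d x \<in> P" unfolding P_def by auto
      then show ?thesis unfolding K'_def using x PV VQ by blast
    next
      case False
      then have "(\<Sum>p\<in>S. complex_of_real (w x p) * cc (fst p) (snd p)) \<noteq> 0" using x a_eq by auto
      then obtain p where p0: "p \<in> S" "complex_of_real (w x p) * cc (fst p) (snd p) \<noteq> 0"
        by (rule sum.not_neutral_contains_not_neutral)
      then have p: "p \<in> S" "w x p \<noteq> 0" by auto
      have "r x \<in> Q" "d x \<in> Q" using wV[OF x(1) p] NNV VQ by blast+
      then show ?thesis unfolding K'_def using x by simp
    qed
  qed
  have gbound: "\<forall>x. cmod (f x - a x) < \<epsilon>"
  proof
    fix x show "cmod (f x - a x) < \<epsilon>"
    proof (cases "x \<in> G")
      case True
      have "cmod (f x - a x) \<le> \<delta>" by (rule est_x[OF True])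
      then show ?thesis using dp by linarith
    next
      case False then show ?thesis using f0 a0 ep by simp
    qed
  qed
  have "(\<lambda>x. f x - a x) \<in> U" by (rule Ue[rule_format, OF gC conjI[OF gsupp gbound]])
  then show "\<exists>a\<in>CS. (\<lambda>x. f x - a x) \<in> U" using aCS by blast
qed

end

theorem mainTheorem12:
  fixes T :: "'g topology" and r d :: "'g \<Rightarrow> 'g" and m :: "'g \<Rightarrow> 'g \<Rightarrow> 'g"
    and i :: "'g \<Rightarrow> 'g" and F :: "'g set" and \<sigma> :: "'g \<Rightarrow> 'g"
  assumes "lcsc_groupoid T r d m i"
    and "principal_groupoid T r d"
    and "proper_groupoid T r d"
    and "F \<subseteq> units T r" and "borel_in (subtopology T (units T r)) F"
    and "\<forall>u\<in>units T r. \<exists>!v. v \<in> F \<and> (\<exists>x\<in>topspace T. d x = u \<and> r x = v)"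
    and "regular_cross_section T r d F \<sigma>"
    and "\<forall>v\<in>F. \<sigma> v = v"
  shows "Hausdorff_space (quotient_topology T (qmap r d m i \<sigma>) (reductionF T r d F)) \<and>
         locally_compact_space (quotient_topology T (qmap r d m i \<sigma>) (reductionF T r d F)) \<and>
         dense_ind_lim T (Csigma T r d m i F \<sigma>)"
proof -
  interpret gsetup T r d m i F \<sigma>
    by (rule gsetup.intro) (rule assms)+
  show ?thesis by (intro conjI Haus_Y LC_Y dense)
qed

end
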